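(* $M_1$ has exactly two irreducible representations, both one-dimensional: the trivial representation, and the representation $L_\xi$ defined by $a\mapsto1+a'$.
   Context: Work in $\operatorname{Ver}_4^+$, the category of $k[d]/d^2$-modules ($\operatorname{char}k=2$, $k$ algebraically closed, $d$ primitive) with braiding $c(v\otimes w)=w\otimes v+dw\otimes dv$, and $a'=da$. $M_1$ is the affine group scheme sending a commutative algebra $A$ to $A$ with group operation $a*b=a+b+a'b$. Its coordinate ring is $k[X,X']$ with $\Delta(X)=X\otimes1+1\otimes X+X'\otimes X$. *)

theory Defs
  imports "HOL-Computational_Algebra.Polynomial" "Jordan_Normal_Form.Matrix"
begin

(* The coordinate ring O(M_1) = k[X,X'] as a commutative algebra in Ver_4^+.
   Commutativity in Ver_4^+ (ab = ba + b'a') forces X'^2 = 0, so O has the k-basis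
   X^i X'^j with i \<in> nat and j \<in> {0,1}.  The basis element X^i X'^j is indexed by
   (i, j = 1), i.e. by a pair of type nat \<times> bool. *)
type_synonym idx = "nat \<times> bool"

(* Elements of O \<otimes> O, as coefficient functions on pairs of basis indices. *)
type_synonym 'k tens = "idx \<Rightarrow> idx \<Rightarrow> 'k"

definition tunit :: "'k::field tens" where
  "tunit = (\<lambda>p q. if p = (0, False) \<and> q = (0, False) then 1 else 0)"

(* e_p \<otimes> e_q  \<mapsto>  e_p X \<otimes> e_q *)
definition lX :: "'k::field tens \<Rightarrow> 'k tens" where
  "lX f = (\<lambda>(i, b) q. if i = 0 then 0 else f (i - 1, b) q)"
(* e_p \<otimes> e_q  \<mapsto>  e_p X' \<otimes> e_q   (X'^2 = 0) *)
definition lX' :: "'k::field tens \<Rightarrow> 'k tens" where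
  "lX' f = (\<lambda>(i, b) q. if b then f (i, False) q else 0)"
(* e_p \<otimes> e_q  \<mapsto>  e_p \<otimes> e_q X *)
definition rX :: "'k::field tens \<Rightarrow> 'k tens" where
  "rX f = (\<lambda>p (i, b). if i = 0 then 0 else f p (i - 1, b))"
(* e_p \<otimes> e_q  \<mapsto>  e_p \<otimes> e_q X' *)
definition rX' :: "'k::field tens \<Rightarrow> 'k tens" where
  "rX' f = (\<lambda>p (i, b). if b then f p (i, False) else 0)"
(* e_p \<otimes> e_q  \<mapsto>  e_p \<otimes> d(e_q), where d is the derivation with dX = X', dX' = 0,
   so d(X^j) = j X^(j-1) X' and d(X^j X') = 0 *)
definition dR :: "'k::field tens \<Rightarrow> 'k tens" where
  "dR f = (\<lambda>p (i, b). if b then of_nat (i + 1) * f p (i + 1, False) else 0)"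

(* Right multiplication in the braided tensor product algebra O \<otimes> O of Ver_4^+,
   (a \<otimes> b)(c \<otimes> e) = ac \<otimes> be + a c' \<otimes> b' e,
   by Delta(X) = X\<otimes>1 + 1\<otimes>X + X'\<otimes>X and by Delta(X') = X'\<otimes>1 + 1\<otimes>X' + X'\<otimes>X'. *)
definition mulDX :: "'k::field tens \<Rightarrow> 'k tens" where
  "mulDX f = (\<lambda>p q. lX f p q + lX' (dR f) p q + rX f p q + lX' (rX f) p q)"
definition mulDX' :: "'k::field tens \<Rightarrow> 'k tens" where
  "mulDX' f = (\<lambda>p q. lX' f p q + rX' f p q + lX' (rX' f) p q)"

(* Comultiplication: coprod m p q = coefficient of e_p \<otimes> e_q in Delta(e_m),
   Delta(X^i X'^j) = Delta(X)^i Delta(X')^j. *)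
definition coprod :: "idx \<Rightarrow> 'k::field tens" where
  "coprod m = (let g = (mulDX ^^ fst m) tunit in if snd m then mulDX' g else g)"

(* A finite-dimensional representation of M_1 (= O(M_1)-comodule in Ver_4^+) on k^n:
   D is the action of d on V (D^2 = 0), and the coaction is
   rho(v) = \<Sum>_m (R m) v \<otimes> e_m.  The conditions say: rho is a morphism in Ver_4^+
   (commutes with d, where d acts on V \<otimes> O by D \<otimes> 1 + 1 \<otimes> d), counitality
   (epsilon(X) = epsilon(X') = 0), and coassociativity. *)
definition M1_rep :: "nat \<Rightarrow> 'k::field mat \<Rightarrow> (idx \<Rightarrow> 'k mat) \<Rightarrow> bool" where
  "M1_rep n D R \<longleftrightarrow>
     D \<in> carrier_mat n n \<and> D * D = 0\<^sub>m n n \<and>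
     (\<forall>m. R m \<in> carrier_mat n n) \<and> finite {m. R m \<noteq> 0\<^sub>m n n} \<and>
     R (0, False) = 1\<^sub>m n \<and>
     (\<forall>i. R (i, False) * D = D * R (i, False)) \<and>
     (\<forall>i. R (i, True) * D = D * R (i, True) + of_nat (i + 1) \<cdot>\<^sub>m R (i + 1, False)) \<and>
     (\<forall>p q a b. a < n \<longrightarrow> b < n \<longrightarrow>
        (R p * R q) $$ (a, b) = (\<Sum>m\<in>{m. R m \<noteq> 0\<^sub>m n n}. coprod m p q * R m $$ (a, b)))"

definition is_subspace :: "nat \<Rightarrow> 'k::field vec set \<Rightarrow> bool" where
  "is_subspace n W \<longleftrightarrow> W \<subseteq> carrier_vec n \<and> 0\<^sub>v n \<in> W \<and>
     (\<forall>v\<in>W. \<forall>w\<in>W. v + w \<in> W) \<and> (\<forall>c. \<forall>v\<in>W. c \<cdot>\<^sub>v v \<in> W)"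

definition M1_subrep :: "nat \<Rightarrow> 'k::field mat \<Rightarrow> (idx \<Rightarrow> 'k mat) \<Rightarrow> 'k vec set \<Rightarrow> bool" where
  "M1_subrep n D R W \<longleftrightarrow> is_subspace n W \<and> (\<forall>v\<in>W. D *\<^sub>v v \<in> W) \<and>
     (\<forall>m. \<forall>v\<in>W. R m *\<^sub>v v \<in> W)"

definition M1_irreducible :: "nat \<Rightarrow> 'k::field mat \<Rightarrow> (idx \<Rightarrow> 'k mat) \<Rightarrow> bool" where
  "M1_irreducible n D R \<longleftrightarrow> M1_rep n D R \<and> n > 0 \<and>
     (\<forall>W. M1_subrep n D R W \<longrightarrow> W = {0\<^sub>v n} \<or> W = carrier_vec n)"

definition M1_iso :: "nat \<Rightarrow> 'k::field mat \<Rightarrow> (idx \<Rightarrow> 'k mat) \<Rightarrow>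
                      nat \<Rightarrow> 'k mat \<Rightarrow> (idx \<Rightarrow> 'k mat) \<Rightarrow> bool" where
  "M1_iso n D R n' D' R' \<longleftrightarrow> n = n' \<and>
     (\<exists>P \<in> carrier_mat n n. invertible_mat P \<and> P * D = D' * P \<and> (\<forall>m. P * R m = R' m * P))"

(* trivial representation: rho(v) = v \<otimes> 1 *)
definition triv_R :: "idx \<Rightarrow> 'k::field mat" where
  "triv_R m = (if m = (0, False) then 1\<^sub>m 1 else 0\<^sub>m 1 1)"

(* L_xi : a \<mapsto> 1 + a', i.e. rho(v) = v \<otimes> (1 + X') *)
definition Lxi_R :: "idx \<Rightarrow> 'k::field mat" where
  "Lxi_R m = (if m = (0, False) \<or> m = (0, True) then 1\<^sub>m 1 else 0\<^sub>m 1 1)"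

end

theory Submission
  imports Defs
begin

definition vanish :: "nat \<Rightarrow> 'k::field tens \<Rightarrow> bool" where
  "vanish K f \<longleftrightarrow> (\<forall>p q. fst p + fst q > K \<longrightarrow> f p q = 0)"

lemma vanish_tunit: "vanish 0 (tunit :: 'k::field tens)"
  unfolding vanish_def tunit_def by auto

lemma vanish_lX: "vanish K f \<Longrightarrow> vanish (Suc K) (lX f)"
  unfolding vanish_def lX_def by (auto split: prod.splits)
lemma vanish_rX: "vanish K f \<Longrightarrow> vanish (Suc K) (rX f)"
  unfolding vanish_def rX_def by (auto split: prod.splits)
lemma vanish_lX': "vanish K f \<Longrightarrow> vanish K (lX' f)"
  unfolding vanish_def lX'_def by (auto split: prod.splits)
lemma vanish_rX': "vanish K f \<Longrightarrow> vanish K (rX' f)"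
  unfolding vanish_def rX'_def by (auto split: prod.splits)
lemma vanish_dR: "vanish K f \<Longrightarrow> vanish K (dR f)"
  unfolding vanish_def dR_def by (auto split: prod.splits)
lemma vanish_mono: "vanish K f \<Longrightarrow> K \<le> K' \<Longrightarrow> vanish K' f"
  unfolding vanish_def by auto

lemma vanish_mulDX: "vanish K f \<Longrightarrow> vanish (Suc K) (mulDX f)"
proof -
  assume h: "vanish K f"
  have a: "vanish (Suc K) (lX f)" "vanish (Suc K) (rX f)" "vanish (Suc K) (lX' (rX f))"
    "vanish (Suc K) (lX' (dR f))"
    using h vanish_lX vanish_rX apply auto[2]
    using h vanish_rX vanish_lX' apply blast
    using h vanish_dR vanish_lX' vanish_mono[of K _ "Suc K"] by (meson le_SucI order_refl)
  then show ?thesis unfolding vanish_def mulDX_def by auto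
qed

lemma vanish_mulDX': "vanish K f \<Longrightarrow> vanish K (mulDX' f)"
proof -
  assume h: "vanish K f"
  have a: "vanish K (lX' f)" "vanish K (rX' f)" "vanish K (lX' (rX' f))"
    using h vanish_lX' vanish_rX' by auto
  then show ?thesis unfolding vanish_def mulDX'_def by auto
qed

lemma vanish_pow: "vanish i ((mulDX ^^ i) (tunit :: 'k::field tens))"
  by (induction i) (auto simp: vanish_tunit vanish_mulDX)

lemma coprod_deg:
  assumes "coprod m p q \<noteq> (0::'k::field)"
  shows "fst p + fst q \<le> fst m"
proof -
  have "vanish (fst m) (coprod m :: 'k tens)"
    unfolding coprod_def Let_def using vanish_pow vanish_mulDX' by auto
  then show ?thesis using assms unfolding vanish_def by (meson not_le)
qed

lemma coprod_0F: "coprod (0, False) = tunit"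
  unfolding coprod_def by simp

lemma coprod_0T: "coprod (0, True) p q =
   (if (p = (0,True) \<and> q = (0,False)) \<or> (p = (0,False) \<and> q = (0,True)) \<or> (p = (0,True) \<and> q = (0,True))
    then 1 else (0::'k::field))"
  unfolding coprod_def mulDX'_def lX'_def rX'_def tunit_def
  by (cases p; cases q; auto)


lemma rep_carrier: "M1_rep n D R \<Longrightarrow> R m \<in> carrier_mat n n"
  unfolding M1_rep_def by (cases m) auto

lemma expand:
  fixes R :: "idx \<Rightarrow> 'k::field mat"
  assumes rep: "M1_rep n D R" and w: "w \<in> carrier_vec n" and a: "a < n"
  shows "((R p * R q) *\<^sub>v w) $ a = (\<Sum>m\<in>{m. R m \<noteq> 0\<^sub>m n n}. coprod m p q * (R m *\<^sub>v w) $ a)"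
proof -
  let ?S = "{m. R m \<noteq> 0\<^sub>m n n}"
  have C: "\<And>m. R m \<in> carrier_mat n n" using rep_carrier[OF rep] .
  have E: "\<And>b. b < n \<Longrightarrow> (R p * R q) $$ (a, b) = (\<Sum>m\<in>?S. coprod m p q * R m $$ (a, b))"
    using rep a unfolding M1_rep_def by blast
  have "((R p * R q) *\<^sub>v w) $ a = (\<Sum>b<n. (R p * R q) $$ (a, b) * w $ b)"
    using C[of p] C[of q] w a by (auto simp del: assoc_mult_mat_vec simp: scalar_prod_def lessThan_atLeast0)
  also have "\<dots> = (\<Sum>b<n. \<Sum>m\<in>?S. coprod m p q * R m $$ (a, b) * w $ b)"
    by (rule sum.cong) (auto simp: E sum_distrib_right)
  also have "\<dots> = (\<Sum>m\<in>?S. \<Sum>b<n. coprod m p q * R m $$ (a, b) * w $ b)"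
    by (rule sum.swap)
  also have "\<dots> = (\<Sum>m\<in>?S. coprod m p q * (R m *\<^sub>v w) $ a)"
  proof (rule sum.cong)
    fix m
    have "(R m *\<^sub>v w) $ a = (\<Sum>b<n. R m $$ (a, b) * w $ b)"
      using C[of m] w a by (auto simp: scalar_prod_def lessThan_atLeast0)
    then show "(\<Sum>b<n. coprod m p q * R m $$ (a, b) * w $ b) = coprod m p q * (R m *\<^sub>v w) $ a"
      by (simp add: sum_distrib_left mult.assoc)
  qed simp
  finally show ?thesis .
qed

lemma kill:
  fixes R :: "idx \<Rightarrow> 'k::field mat"
  assumes rep: "M1_rep n D R" and w: "w \<in> carrier_vec n"
    and h: "\<And>m. coprod m p q \<noteq> (0::'k) \<Longrightarrow> R m *\<^sub>v w = 0\<^sub>v n"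
  shows "(R p * R q) *\<^sub>v w = 0\<^sub>v n"
proof (rule eq_vecI)
  have C: "\<And>m. R m \<in> carrier_mat n n" using rep_carrier[OF rep] .
  show "dim_vec ((R p * R q) *\<^sub>v w) = dim_vec (0\<^sub>v n)" using C[of p] by simp
  fix a assume "a < dim_vec (0\<^sub>v n :: 'k vec)"
  then have a: "a < n" by simp
  have "((R p * R q) *\<^sub>v w) $ a = (\<Sum>m\<in>{m. R m \<noteq> 0\<^sub>m n n}. coprod m p q * (R m *\<^sub>v w) $ a)"
    by (rule expand[OF rep w a])
  also have "\<dots> = 0"
  proof (rule sum.neutral, clarify)
    fix m assume "R m \<noteq> 0\<^sub>m n n"
    show "coprod m p q * (R m *\<^sub>v w) $ a = 0"
    proof (cases "coprod m p q = (0::'k)")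
      case False then show ?thesis using h a by simp
    qed simp
  qed
  finally show "((R p * R q) *\<^sub>v w) $ a = 0\<^sub>v n $ a" using a by simp
qed


lemma zero_mult_vec: "w \<in> carrier_vec n \<Longrightarrow> 0\<^sub>m n n *\<^sub>v w = (0\<^sub>v n :: 'a::semiring_0 vec)"
  by (rule eq_vecI) (auto simp: scalar_prod_def)

lemma step_vec:
  fixes R :: "idx \<Rightarrow> 'k::field mat"
  assumes rep: "M1_rep n D R" and u: "u \<in> carrier_vec n"
    and hu: "\<And>m. fst m \<ge> Suc k \<Longrightarrow> R m *\<^sub>v u = 0\<^sub>v n"
    and m0: "fst m0 = k" and k: "k \<ge> 1" and m: "fst m \<ge> k"
  shows "R m *\<^sub>v (R m0 *\<^sub>v u) = 0\<^sub>v n"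
proof -
  have C: "\<And>m. R m \<in> carrier_mat n n" using rep_carrier[OF rep] .
  have "R m *\<^sub>v (R m0 *\<^sub>v u) = (R m * R m0) *\<^sub>v u" using assoc_mult_mat_vec[OF C C u] by simp
  also have "\<dots> = 0\<^sub>v n"
  proof (rule kill[OF rep u])
    fix m' assume "coprod m' m m0 \<noteq> (0::'k)"
    then have "fst m + fst m0 \<le> fst m'" by (rule coprod_deg)
    then show "R m' *\<^sub>v u = 0\<^sub>v n" using m m0 k hu by simp
  qed
  finally show ?thesis .
qed

lemma exists_K:
  fixes R :: "idx \<Rightarrow> 'k::field mat"
  assumes rep: "M1_rep n D R" and n: "n > 0"
  shows "\<exists>w\<in>carrier_vec n. w \<noteq> 0\<^sub>v n \<and> (\<forall>m. fst m \<ge> 1 \<longrightarrow> R m *\<^sub>v w = 0\<^sub>v n)"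
proof -
  have C: "\<And>m. R m \<in> carrier_mat n n" using rep_carrier[OF rep] .
  let ?S = "{m. R m \<noteq> 0\<^sub>m n n}"
  have fin: "finite ?S" using rep unfolding M1_rep_def by blast
  define N where "N = Max (fst ` ?S)"
  have big: "R m = 0\<^sub>m n n" if "fst m > N" for m
  proof (rule ccontr)
    assume "R m \<noteq> 0\<^sub>m n n"
    then have "fst m \<le> N" unfolding N_def using fin by (intro Max_ge) auto
    then show False using that by simp
  qed
  let ?P = "\<lambda>k. \<exists>w\<in>carrier_vec n. w \<noteq> 0\<^sub>v n \<and> (\<forall>m. fst m \<ge> k \<longrightarrow> R m *\<^sub>v w = 0\<^sub>v n)"
  have "?P (Suc N - j)" if "j \<le> N" for j
    using that
  proof (induction j)
    case 0
    have "unit_vec n 0 \<in> carrier_vec n" "unit_vec n 0 \<noteq> (0\<^sub>v n :: 'k vec)"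
      using n by (auto simp: unit_vec_def vec_eq_iff)
    moreover have "R m *\<^sub>v unit_vec n 0 = 0\<^sub>v n" if "fst m \<ge> Suc N" for m
      using big[of m] that zero_mult_vec[of "unit_vec n 0" n] by simp
    ultimately show ?case by auto
  next
    case (Suc j)
    define k where "k = N - j"
    have k1: "k \<ge> 1" and kk: "Suc N - j = Suc k" and kk': "Suc N - Suc j = k"
      using Suc.prems unfolding k_def by auto
    obtain u where u: "u \<in> carrier_vec n" "u \<noteq> 0\<^sub>v n"
      and hu: "\<And>m. fst m \<ge> Suc k \<Longrightarrow> R m *\<^sub>v u = 0\<^sub>v n"
      using Suc.IH Suc.prems kk by auto
    have case_split: "fst m \<ge> Suc k \<or> m = (k, False) \<or> m = (k, True)" if "fst m \<ge> k" for m
      using that by (cases m) auto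
    have gen: "?P k" if m0: "fst m0 = k" and nz: "R m0 *\<^sub>v u \<noteq> 0\<^sub>v n" for m0
    proof -
      have "R m0 *\<^sub>v u \<in> carrier_vec n" using C[of m0] u(1) by simp
      moreover have "\<forall>m. fst m \<ge> k \<longrightarrow> R m *\<^sub>v (R m0 *\<^sub>v u) = 0\<^sub>v n"
        using step_vec[OF rep u(1) hu m0 k1] by blast
      ultimately show ?thesis using nz by blast
    qed
    have "?P k"
    proof (cases "R (k, False) *\<^sub>v u = 0\<^sub>v n \<and> R (k, True) *\<^sub>v u = 0\<^sub>v n")
      case True
      have "\<forall>m. fst m \<ge> k \<longrightarrow> R m *\<^sub>v u = 0\<^sub>v n"
      proof (intro allI impI)
        fix m :: idx assume "fst m \<ge> k"
        then have "fst m \<ge> Suc k \<or> m = (k, False) \<or> m = (k, True)" by (rule case_split)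
        then show "R m *\<^sub>v u = 0\<^sub>v n" using True hu by blast
      qed
      then show ?thesis using u by blast
    next
      case False
      then show ?thesis using gen[of "(k, False)"] gen[of "(k, True)"] by auto
    qed
    then show ?case unfolding kk' .
  qed
  from this[of N] show ?thesis by simp
qed


lemma mat_vec_zero: "A \<in> carrier_mat nr n \<Longrightarrow> A *\<^sub>v 0\<^sub>v n = (0\<^sub>v nr :: 'a::semiring_0 vec)"
  by (rule eq_vecI) (auto simp: scalar_prod_def)
lemma smult_mat_vec: "A \<in> carrier_mat nr n \<Longrightarrow> u \<in> carrier_vec n \<Longrightarrow>
   (c \<cdot>\<^sub>m A) *\<^sub>v u = c \<cdot>\<^sub>v (A *\<^sub>v u :: 'a::comm_ring_1 vec)"
  by (rule eq_vecI) (auto simp: scalar_prod_def sum_distrib_left ac_simps)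
lemma smult_zero_v: "c \<cdot>\<^sub>v 0\<^sub>v n = (0\<^sub>v n :: 'a::ring vec)"
  by (rule eq_vecI) auto
lemma zero_smult_v: "u \<in> carrier_vec n \<Longrightarrow> 0 \<cdot>\<^sub>v u = (0\<^sub>v n :: 'a::ring vec)"
  by (rule eq_vecI) auto

lemma irr_dim1:
  fixes R :: "idx \<Rightarrow> 'k::field mat"
  assumes irr: "M1_irreducible n D R"
  shows "n = 1"
proof -
  have rep: "M1_rep n D R" and n: "n > 0"
    and sub: "\<And>W. M1_subrep n D R W \<Longrightarrow> W = {0\<^sub>v n} \<or> W = carrier_vec n"
    using irr unfolding M1_irreducible_def by auto
  have C: "\<And>m. R m \<in> carrier_mat n n" using rep_carrier[OF rep] .
  have DC: "D \<in> carrier_mat n n" and DD: "D * D = 0\<^sub>m n n" and R0: "R (0, False) = 1\<^sub>m n"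
    and comF: "\<And>i. R (i, False) * D = D * R (i, False)"
    and comT: "\<And>i. R (i, True) * D = D * R (i, True) + of_nat (i + 1) \<cdot>\<^sub>m R (i + 1, False)"
    using rep unfolding M1_rep_def by auto
  define K where "K = {w \<in> carrier_vec n. \<forall>m. fst m \<ge> 1 \<longrightarrow> R m *\<^sub>v w = 0\<^sub>v n}"
  obtain w where w: "w \<in> K" "w \<noteq> 0\<^sub>v n"
    using exists_K[OF rep n] unfolding K_def by blast
  define B where "B = R (0, True)"
  have BC: "B \<in> carrier_mat n n" unfolding B_def by (rule C)
  have Kc: "u \<in> carrier_vec n" if "u \<in> K" for u using that unfolding K_def by auto
  have Kk: "R m *\<^sub>v u = 0\<^sub>v n" if "u \<in> K" "fst m \<ge> 1" for u m using that unfolding K_def by (cases m) auto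
  have KB: "B *\<^sub>v u \<in> K" if u: "u \<in> K" for u
  proof -
    have "R m *\<^sub>v (B *\<^sub>v u) = 0\<^sub>v n" if m: "fst m \<ge> 1" for m
    proof -
      have "R m *\<^sub>v (B *\<^sub>v u) = (R m * B) *\<^sub>v u" using assoc_mult_mat_vec[OF C BC Kc[OF u]] by simp
      also have "\<dots> = 0\<^sub>v n" unfolding B_def
      proof (rule kill[OF rep Kc[OF u]])
        fix m' assume "coprod m' m (0, True) \<noteq> (0::'k)"
        then have "fst m + fst (0::nat, True) \<le> fst m'" by (rule coprod_deg)
        then show "R m' *\<^sub>v u = 0\<^sub>v n" using m Kk[OF u] by simp
      qed
      finally show ?thesis .
    qed
    then show ?thesis unfolding K_def using BC Kc[OF u] by auto
  qed
  have KD: "D *\<^sub>v u \<in> K" if u: "u \<in> K" for u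
  proof -
    have uc: "u \<in> carrier_vec n" by (rule Kc[OF u])
    have "R m *\<^sub>v (D *\<^sub>v u) = 0\<^sub>v n" if m: "fst m \<ge> 1" for m
    proof -
      obtain i b where mi: "m = (i, b)" by (cases m)
      have "R m *\<^sub>v (D *\<^sub>v u) = (R m * D) *\<^sub>v u" using assoc_mult_mat_vec[OF C DC uc] by simp
      also have "\<dots> = 0\<^sub>v n"
      proof (cases b)
        case False
        have "(R m * D) *\<^sub>v u = (D * R m) *\<^sub>v u" using comF[of i] mi False by simp
        also have "\<dots> = D *\<^sub>v (R m *\<^sub>v u)" using assoc_mult_mat_vec[OF DC C uc] by simp
        also have "\<dots> = 0\<^sub>v n" using Kk[OF u m] mat_vec_zero[OF DC] by simp
        finally show ?thesis .
      next
        case True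
        have "(R m * D) *\<^sub>v u = (D * R m + of_nat (i + 1) \<cdot>\<^sub>m R (i + 1, False)) *\<^sub>v u"
          using comT[of i] mi True by simp
        also have "\<dots> = (D * R m) *\<^sub>v u + (of_nat (i + 1) \<cdot>\<^sub>m R (i + 1, False)) *\<^sub>v u"
          using DC C uc by (intro add_mult_distrib_mat_vec[of _ n n]) auto
        also have "\<dots> = D *\<^sub>v (R m *\<^sub>v u) + of_nat (i + 1) \<cdot>\<^sub>v (R (i + 1, False) *\<^sub>v u)"
          using assoc_mult_mat_vec[OF DC C uc] smult_mat_vec[OF C uc] by simp
        also have "\<dots> = 0\<^sub>v n" using Kk[OF u m] Kk[OF u, of "(i+1, False)"] mat_vec_zero[OF DC]
          smult_zero_v by simp
        finally show ?thesis .
      qed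
      finally show ?thesis .
    qed
    then show ?thesis unfolding K_def using DC uc by auto
  qed
  have BB: "B *\<^sub>v (B *\<^sub>v u) = B *\<^sub>v u" if u: "u \<in> K" for u
  proof -
    have uc: "u \<in> carrier_vec n" by (rule Kc[OF u])
    have "B *\<^sub>v (B *\<^sub>v u) = (B * B) *\<^sub>v u" using assoc_mult_mat_vec[OF BC BC uc] by simp
    also have "\<dots> = B *\<^sub>v u"
    proof (rule eq_vecI)
      show "dim_vec ((B * B) *\<^sub>v u) = dim_vec (B *\<^sub>v u)" using BC by simp
      fix a assume "a < dim_vec (B *\<^sub>v u)"
      then have a: "a < n" using BC by simp
      have "((B * B) *\<^sub>v u) $ a = (\<Sum>m\<in>{m. R m \<noteq> 0\<^sub>m n n}. coprod m (0, True) (0, True) * (R m *\<^sub>v u) $ a)"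
        unfolding B_def by (rule expand[OF rep uc a])
      also have "\<dots> = (\<Sum>m\<in>{m. R m \<noteq> 0\<^sub>m n n}. if m = (0, True) then (B *\<^sub>v u) $ a else 0)"
      proof (rule sum.cong)
        fix m :: idx
        show "coprod m (0, True) (0, True) * (R m *\<^sub>v u) $ a = (if m = (0, True) then (B *\<^sub>v u) $ a else 0)"
        proof (cases "fst m \<ge> 1")
          case True
          then show ?thesis using Kk[OF u True] a by auto
        next
          case False
          then obtain b where "m = (0, b)" by (cases m) auto
          then show ?thesis by (cases b) (auto simp: coprod_0T coprod_0F tunit_def B_def)
        qed
      qed simp
      also have "\<dots> = (B *\<^sub>v u) $ a"
      proof (cases "R (0, True) = 0\<^sub>m n n")
        case True
        have "(\<Sum>m\<in>{m. R m \<noteq> 0\<^sub>m n n}. if m = (0, True) then (B *\<^sub>v u) $ a else 0) = 0"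
          using True by (intro sum.neutral) auto
        then show ?thesis using True uc a unfolding B_def
          by (simp add: zero_mult_vec[OF uc])
      next
        case False
        have fin: "finite {m. R m \<noteq> 0\<^sub>m n n}" using rep unfolding M1_rep_def by blast
        show ?thesis using False by (simp add: sum.delta[OF fin])
      qed
      finally show "((B * B) *\<^sub>v u) $ a = (B *\<^sub>v u) $ a" .
    qed
    finally show ?thesis .
  qed
  have BD: "B *\<^sub>v (D *\<^sub>v u) = D *\<^sub>v (B *\<^sub>v u)" if u: "u \<in> K" for u
  proof -
    have uc: "u \<in> carrier_vec n" by (rule Kc[OF u])
    have "B *\<^sub>v (D *\<^sub>v u) = (B * D) *\<^sub>v u" using assoc_mult_mat_vec[OF BC DC uc] by simp
    also have "\<dots> = (D * B + of_nat (0 + 1) \<cdot>\<^sub>m R (0 + 1, False)) *\<^sub>v u"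
      using comT[of 0] unfolding B_def by simp
    also have "\<dots> = (D * B) *\<^sub>v u + (of_nat (0 + 1) \<cdot>\<^sub>m R (0 + 1, False)) *\<^sub>v u"
      using DC C BC uc by (intro add_mult_distrib_mat_vec[of _ n n]) auto
    also have "\<dots> = D *\<^sub>v (B *\<^sub>v u) + of_nat (0 + 1) \<cdot>\<^sub>v (R (0 + 1, False) *\<^sub>v u)"
      using assoc_mult_mat_vec[OF DC BC uc] smult_mat_vec[OF C uc] by simp
    also have "\<dots> = D *\<^sub>v (B *\<^sub>v u)" using Kk[OF u, of "(0+1, False)"] smult_zero_v DC BC uc by simp
    finally show ?thesis .
  qed
  obtain u lam where u: "u \<in> K" "u \<noteq> 0\<^sub>v n" and Bu: "B *\<^sub>v u = lam \<cdot>\<^sub>v u"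
  proof (cases "B *\<^sub>v w = 0\<^sub>v n")
    case True
    then show ?thesis using that[of w 0] w zero_smult_v[OF Kc[OF w(1)]] by simp
  next
    case False
    then show ?thesis using that[of "B *\<^sub>v w" 1] KB[OF w(1)] BB[OF w(1)] by simp
  qed
  obtain v where v: "v \<in> K" "v \<noteq> 0\<^sub>v n" and Dv: "D *\<^sub>v v = 0\<^sub>v n" and Bv: "B *\<^sub>v v = lam \<cdot>\<^sub>v v"
  proof (cases "D *\<^sub>v u = 0\<^sub>v n")
    case True
    then show ?thesis using that[of u] u Bu by simp
  next
    case False
    have uc: "u \<in> carrier_vec n" by (rule Kc[OF u(1)])
    have "D *\<^sub>v (D *\<^sub>v u) = 0\<^sub>v n" using assoc_mult_mat_vec[OF DC DC uc] DD zero_mult_vec[OF uc] by simp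
    moreover have "B *\<^sub>v (D *\<^sub>v u) = lam \<cdot>\<^sub>v (D *\<^sub>v u)" using BD[OF u(1)] Bu mult_mat_vec[OF DC uc] by simp
    ultimately show ?thesis using that[of "D *\<^sub>v u"] KD[OF u(1)] False by simp
  qed
  have vc: "v \<in> carrier_vec n" by (rule Kc[OF v(1)])
  define W where "W = range (\<lambda>c. c \<cdot>\<^sub>v v)"
  have "M1_subrep n D R W"
    unfolding M1_subrep_def is_subspace_def
  proof (intro conjI ballI allI)
    show "W \<subseteq> carrier_vec n" unfolding W_def using vc by auto
    show "0\<^sub>v n \<in> W" unfolding W_def using zero_smult_v[OF vc] by (intro range_eqI[of _ _ 0]) simp
    fix x assume "x \<in> W"
    then obtain c where x: "x = c \<cdot>\<^sub>v v" unfolding W_def by auto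
    {
      fix y assume "y \<in> W"
      then obtain c' where y: "y = c' \<cdot>\<^sub>v v" unfolding W_def by auto
      show "x + y \<in> W" unfolding W_def x y add_smult_distrib_vec[symmetric] by simp
    }
    {
      fix c'
      show "c' \<cdot>\<^sub>v x \<in> W" unfolding W_def x smult_smult_assoc by simp
    }
    show "D *\<^sub>v x \<in> W" unfolding W_def x mult_mat_vec[OF DC vc] Dv smult_zero_v
      using zero_smult_v[OF vc] by (intro range_eqI[of _ _ 0]) simp
    fix m
    show "R m *\<^sub>v x \<in> W"
    proof (cases "fst m \<ge> 1")
      case True
      then show ?thesis unfolding W_def x mult_mat_vec[OF C vc] Kk[OF v(1) True] smult_zero_v
        using zero_smult_v[OF vc] by (intro range_eqI[of _ _ 0]) simp
    next
      case False
      then obtain b where mb: "m = (0, b)" by (cases m) auto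
      show ?thesis
      proof (cases b)
        case True
        then have "R m = B" using mb B_def by simp
        then show ?thesis unfolding W_def x mult_mat_vec[OF C vc] using Bv
          by (simp add: smult_smult_assoc)
      next
        case False
        then have "R m = 1\<^sub>m n" using mb R0 by simp
        then show ?thesis unfolding W_def x using vc by simp
      qed
    qed
  qed
  from sub[OF this] have "W = {0\<^sub>v n} \<or> W = carrier_vec n" .
  moreover have "v \<in> W" unfolding W_def by (intro range_eqI[of _ _ 1]) simp
  ultimately have WC: "W = carrier_vec n" using v(2) by auto
  show "n = 1"
  proof (rule ccontr)
    assume "n \<noteq> 1"
    then have n2: "n \<ge> 2" using n by simp
    have "unit_vec n 0 \<in> W" "unit_vec n 1 \<in> W" unfolding WC by auto
    then obtain c c' where c: "unit_vec n 0 = c \<cdot>\<^sub>v v" and c': "unit_vec n 1 = c' \<cdot>\<^sub>v v"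
      unfolding W_def by auto
    have "(unit_vec n 0 :: 'k vec) $ 0 = 1" using n2 by simp
    then have "c * v $ 0 = 1" using c vc n2 by (metis index_smult_vec(1) carrier_vecD less_le_trans pos2)
    then have v0: "v $ 0 \<noteq> 0" by auto
    have "(unit_vec n 1 :: 'k vec) $ 0 = 0" using n2 by simp
    then have "c' * v $ 0 = 0" using c' vc n2 by (metis index_smult_vec(1) carrier_vecD less_le_trans pos2)
    then have "c' = 0" using v0 by simp
    then have "unit_vec n 1 = (0\<^sub>v n :: 'k vec)" using c' zero_smult_v[OF vc] by simp
    moreover have "(unit_vec n 1 :: 'k vec) $ 1 = 1" using n2 by simp
    ultimately show False using n2 by simp
  qed
qed


lemma mult11: "A \<in> carrier_mat 1 1 \<Longrightarrow> B \<in> carrier_mat 1 1 \<Longrightarrow>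
   (A * B) $$ (0, 0) = A $$ (0, 0) * (B $$ (0, 0) :: 'a::comm_ring_1)"
  by (simp add: scalar_prod_def)

lemma mat11_eq: "A \<in> carrier_mat 1 1 \<Longrightarrow> B \<in> carrier_mat 1 1 \<Longrightarrow> A $$ (0, 0) = B $$ (0, 0) \<Longrightarrow> A = B"
  by (rule eq_matI) auto

lemma one_ne_zero11: "(1\<^sub>m 1 :: 'k::field mat) \<noteq> 0\<^sub>m 1 1"
proof
  assume "(1\<^sub>m 1 :: 'k mat) = 0\<^sub>m 1 1"
  then have "(1\<^sub>m 1 :: 'k mat) $$ (0, 0) = (0\<^sub>m 1 1 :: 'k mat) $$ (0, 0)" by simp
  then show False by simp
qed

lemma inv_one11: "invertible_mat (1\<^sub>m 1 :: 'k::field mat)"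
  unfolding invertible_mat_def inverts_mat_def square_mat.simps
  by (intro conjI exI[of _ "1\<^sub>m 1"]) auto

lemma subspace1: "is_subspace 1 (W :: 'k::field vec set) \<Longrightarrow> W = {0\<^sub>v 1} \<or> W = carrier_vec 1"
proof -
  assume sub: "is_subspace 1 W"
  show ?thesis
  proof (cases "W \<subseteq> {0\<^sub>v 1}")
    case True
    then show ?thesis using sub unfolding is_subspace_def by auto
  next
    case False
    then obtain v where v: "v \<in> W" "v \<noteq> 0\<^sub>v 1" by auto
    have vc: "v \<in> carrier_vec 1" using sub v unfolding is_subspace_def by auto
    have v0: "v $ 0 \<noteq> 0"
    proof
      assume "v $ 0 = 0"
      then have "v = 0\<^sub>v 1" using vc by (intro eq_vecI) auto
      then show False using v by simp
    qed
    have "u \<in> W" if u: "u \<in> carrier_vec 1" for u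
    proof -
      have "u = (u $ 0 / v $ 0) \<cdot>\<^sub>v v" using u vc v0 by (intro eq_vecI) auto
      then show ?thesis using sub v unfolding is_subspace_def by metis
    qed
    then show ?thesis using sub unfolding is_subspace_def by auto
  qed
qed

lemma triv_carrier: "triv_R m \<in> carrier_mat 1 1" unfolding triv_R_def by simp
lemma Lxi_carrier: "Lxi_R m \<in> carrier_mat 1 1" unfolding Lxi_R_def by simp

lemma triv_rep: "M1_rep 1 (0\<^sub>m 1 1 :: 'k::field mat) triv_R"
proof -
  have S: "{m. (triv_R m :: 'k mat) \<noteq> 0\<^sub>m 1 1} = {(0, False)}"
    unfolding triv_R_def using one_ne_zero11 by auto
  have co: "((triv_R p :: 'k mat) * triv_R q) $$ (0, 0) =
     (\<Sum>m\<in>{m. (triv_R m :: 'k mat) \<noteq> 0\<^sub>m 1 1}. coprod m p q * triv_R m $$ (0, 0))" for p q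
    unfolding S using mult11[OF triv_carrier triv_carrier, of p q]
    by (simp add: coprod_0F tunit_def triv_R_def)
  show ?thesis unfolding M1_rep_def
    using co S by (auto simp: triv_R_def)
qed

lemma Lxi_rep: "M1_rep 1 (0\<^sub>m 1 1 :: 'k::field mat) Lxi_R"
proof -
  have S: "{m. (Lxi_R m :: 'k mat) \<noteq> 0\<^sub>m 1 1} = {(0, False), (0, True)}"
    unfolding Lxi_R_def using one_ne_zero11 by auto
  have co: "((Lxi_R p :: 'k mat) * Lxi_R q) $$ (0, 0) =
     (\<Sum>m\<in>{m. (Lxi_R m :: 'k mat) \<noteq> 0\<^sub>m 1 1}. coprod m p q * Lxi_R m $$ (0, 0))" for p q
    unfolding S using mult11[OF Lxi_carrier Lxi_carrier, of p q]
    by (simp add: coprod_0F coprod_0T tunit_def Lxi_R_def)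
  show ?thesis unfolding M1_rep_def
    using co S by (auto simp: Lxi_R_def)
qed

lemma classify1:
  fixes R :: "idx \<Rightarrow> 'k::field mat"
  assumes rep: "M1_rep 1 D R"
  shows "M1_iso 1 D R 1 (0\<^sub>m 1 1) triv_R \<or> M1_iso 1 D R 1 (0\<^sub>m 1 1) Lxi_R"
proof -
  have C: "\<And>m. R m \<in> carrier_mat 1 1" using rep_carrier[OF rep] .
  have DC: "D \<in> carrier_mat 1 1" and DD: "D * D = 0\<^sub>m 1 1" and R0: "R (0, False) = 1\<^sub>m 1"
    and fin: "finite {m. R m \<noteq> 0\<^sub>m 1 1}"
    and co: "\<And>p q. (R p * R q) $$ (0, 0) = (\<Sum>m\<in>{m. R m \<noteq> 0\<^sub>m 1 1}. coprod m p q * R m $$ (0, 0))"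
    using rep unfolding M1_rep_def by auto
  let ?S = "{m. R m \<noteq> 0\<^sub>m 1 1}"
  have inS: "m \<in> ?S \<longleftrightarrow> R m $$ (0, 0) \<noteq> 0" for m
  proof
    assume "m \<in> ?S"
    then show "R m $$ (0, 0) \<noteq> 0" using mat11_eq[OF C[of m], of "0\<^sub>m 1 1"] by auto
  next
    assume "R m $$ (0, 0) \<noteq> 0"
    then show "m \<in> ?S" by auto
  qed
  have D0: "D = 0\<^sub>m 1 1"
  proof -
    have "D $$ (0, 0) * D $$ (0, 0) = 0" using mult11[OF DC DC] DD by simp
    then show ?thesis using DC by (intro mat11_eq) auto
  qed
  have F0: "(0, False) \<in> ?S" using R0 one_ne_zero11 by simp
  have deg0: "fst m = 0" if m: "m \<in> ?S" for m
  proof (rule ccontr)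
    assume "fst m \<noteq> 0"
    define N where "N = Max (fst ` ?S)"
    have le: "fst m' \<le> N" if "m' \<in> ?S" for m' unfolding N_def using fin that by auto
    have "N \<in> fst ` ?S" unfolding N_def using fin F0 by (intro Max_in) auto
    then obtain m0 where m0: "m0 \<in> ?S" "fst m0 = N" by auto
    have Npos: "N > 0" using le[OF m] \<open>fst m \<noteq> 0\<close> by simp
    have "(R m0 * R m0) $$ (0, 0) = 0" unfolding co
    proof (rule sum.neutral, intro ballI)
      fix m' assume m': "m' \<in> ?S"
      show "coprod m' m0 m0 * R m' $$ (0, 0) = 0"
      proof (cases "coprod m' m0 m0 = (0::'k)")
        case False
        then have "fst m0 + fst m0 \<le> fst m'" by (rule coprod_deg)
        then show ?thesis using le[OF m'] m0 Npos by simp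
      qed simp
    qed
    then have "R m0 $$ (0, 0) = 0" using mult11[OF C C, of m0 m0] by simp
    then show False using m0 inS by blast
  qed
  define y where "y = R (0, True) $$ (0, 0)"
  have "y * y = y"
  proof -
    have "y * y = (\<Sum>m\<in>?S. coprod m (0, True) (0, True) * R m $$ (0, 0))"
      unfolding y_def using co[of "(0, True)" "(0, True)"] mult11[OF C C] by simp
    also have "\<dots> = (\<Sum>m\<in>?S. if m = (0, True) then y else 0)"
    proof (rule sum.cong)
      fix m assume m: "m \<in> ?S"
      then obtain b where "m = (0, b)" using deg0 by (cases m) auto
      then show "coprod m (0, True) (0, True) * R m $$ (0, 0) = (if m = (0, True) then y else 0)"
        by (cases b) (auto simp: coprod_0F coprod_0T tunit_def y_def)
    qed simp
    also have "\<dots> = y"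
    proof (cases "(0, True) \<in> ?S")
      case True
      then show ?thesis using sum.delta[OF fin, of "(0, True)" "\<lambda>_. y"] by simp
    next
      case False
      then have "y = 0" using inS[of "(0, True)"] unfolding y_def by blast
      moreover have "(\<Sum>m\<in>?S. if m = (0, True) then y else 0) = 0"
        using \<open>y = 0\<close> by (intro sum.neutral) auto
      ultimately show ?thesis by simp
    qed
    finally show ?thesis .
  qed
  then have y01: "y = 0 \<or> y = 1"
    by (metis mult_cancel_right1 mult_zero_left)
  have Rm: "R m $$ (0, 0) = (if m = (0, False) then 1 else if m = (0, True) then y else 0)" for m
  proof -
    have "m \<notin> ?S" if "m \<noteq> (0, False)" "m \<noteq> (0, True)"
      using deg0[of m] that by (cases m) auto
    then show ?thesis using R0 y_def inS[of m] by auto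
  qed
  have iso: "M1_iso 1 D R 1 (0\<^sub>m 1 1) R'" if R'C: "\<And>m. R' m \<in> carrier_mat 1 1"
    and R'e: "\<And>m. R' m $$ (0, 0) = R m $$ (0, 0)" for R'
    unfolding M1_iso_def
  proof (intro conjI refl bexI[of _ "1\<^sub>m 1"] allI)
    show "invertible_mat (1\<^sub>m 1 :: 'k mat)" by (rule inv_one11)
    show "1\<^sub>m 1 * D = 0\<^sub>m 1 1 * 1\<^sub>m 1" using D0 by simp
    fix m
    have "R m = R' m" using R'e[of m] by (intro mat11_eq[OF C R'C]) simp
    then show "1\<^sub>m 1 * R m = R' m * 1\<^sub>m 1" using C[of m] R'C[of m] by simp
  qed simp
  show ?thesis
  proof (cases "y = 0")
    case True
    have "M1_iso 1 D R 1 (0\<^sub>m 1 1) triv_R"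
      by (rule iso[OF triv_carrier]) (simp add: Rm True triv_R_def)
    then show ?thesis by simp
  next
    case False
    then have "y = 1" using y01 by simp
    have "M1_iso 1 D R 1 (0\<^sub>m 1 1) Lxi_R"
      by (rule iso[OF Lxi_carrier]) (auto simp: Rm \<open>y = 1\<close> Lxi_R_def)
    then show ?thesis by simp
  qed
qed

theorem mainTheorem17:
  fixes k_type :: "'k::alg_closed_field itself"
  assumes "CHAR('k) = 2"
  shows "M1_irreducible 1 (0\<^sub>m 1 1 :: 'k mat) triv_R \<and>
         M1_irreducible 1 (0\<^sub>m 1 1 :: 'k mat) Lxi_R \<and>
         \<not> M1_iso 1 (0\<^sub>m 1 1 :: 'k mat) triv_R 1 (0\<^sub>m 1 1) Lxi_R \<and>
         (\<forall>n (D :: 'k mat) R. M1_irreducible n D R \<longrightarrow>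
            M1_iso n D R 1 (0\<^sub>m 1 1) triv_R \<or> M1_iso n D R 1 (0\<^sub>m 1 1) Lxi_R)"
proof (intro conjI allI impI)
  show "M1_irreducible 1 (0\<^sub>m 1 1 :: 'k mat) triv_R"
    unfolding M1_irreducible_def M1_subrep_def using triv_rep subspace1 by blast
  show "M1_irreducible 1 (0\<^sub>m 1 1 :: 'k mat) Lxi_R"
    unfolding M1_irreducible_def M1_subrep_def using Lxi_rep subspace1 by blast
  show "\<not> M1_iso 1 (0\<^sub>m 1 1 :: 'k mat) triv_R 1 (0\<^sub>m 1 1) Lxi_R"
  proof
    assume "M1_iso 1 (0\<^sub>m 1 1 :: 'k mat) triv_R 1 (0\<^sub>m 1 1) Lxi_R"
    then obtain P :: "'k mat" where P: "P \<in> carrier_mat 1 1" "invertible_mat P"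
      and PR: "P * triv_R (0, True) = Lxi_R (0, True) * P"
      unfolding M1_iso_def by blast
    have "P = 0\<^sub>m 1 1" using PR P(1) by (simp add: triv_R_def Lxi_R_def)
    then obtain B :: "'k mat" where B: "0\<^sub>m 1 1 * B = 1\<^sub>m 1" and B2: "B * 0\<^sub>m 1 1 = 1\<^sub>m (dim_row B)"
      using P unfolding invertible_mat_def inverts_mat_def by auto
    have "dim_row B = 1" using arg_cong[OF B2, of dim_col] by simp
    have "dim_col B = 1" using arg_cong[OF B, of dim_col] by simp
    then have "(0\<^sub>m 1 1 * B) $$ (0, 0) = (0::'k)" using \<open>dim_row B = 1\<close> by (simp add: scalar_prod_def)
    then show False using B by simp
  qed
  fix n and D :: "'k mat" and R
  assume irr: "M1_irreducible n D R"
  have "n = 1" by (rule irr_dim1[OF irr])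
  then show "M1_iso n D R 1 (0\<^sub>m 1 1) triv_R \<or> M1_iso n D R 1 (0\<^sub>m 1 1) Lxi_R"
    using classify1 irr unfolding M1_irreducible_def by blast
qed


end
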